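(* Let $1\le p<\infty$ and $\rho(t)=e^{-t^2-\epsilon pt}$, and let $\mu$ be the associated measure on $X$. Then there exists $u\in N^{1,p}(X)$ such that the trace $\widetilde u$ exists (indeed $\widetilde u\equiv0$ on $Z$) but the trace $\mathscr Tu$ does not exist.
   Context: Standing setting. $(Z,d_Z,\nu)$ is a compact metric space with $0<\operatorname{diam}Z<1$, and $\nu$ is a doubling Borel measure. Fix $\alpha,\tau>1$ and $z_0\in Z$. Let $A_0=\{z_0\}$ and, for $n\ge1$, let $A_n\subset Z$ be a maximal $\alpha^{-n}$-separated set, chosen so that $A_n\subset A_m$ whenever $m>n\ge0$. Put $V_n=\{(x,n):x\in A_n\}$, $V=\bigcup_nV_n$, root $v_0=(z_0,0)$, $B_v=\mathbb B_Z(x,\alpha^{-n})$ for $v=(x,n)$. Two distinct vertices $(x,n),(y,m)$ are joined by an edge iff $|n-m|\le1$ and $\mathbb B_Z(x,\tau^{1-|n-m|}\alpha^{-n})\cap\mathbb B_Z(y,\tau^{1-|n-m|}\alpha^{-m})\neq\emptyset$. $X$ is this graph as a metric graph with unit-length edges; $|x|$ is the graph distance from $x$ to $v_0$, $d|x|$ is length measure on edges. Let $\epsilon=\log\alpha$, $d(y,z)=\inf_\gamma\int_\gamma e^{-\epsilon|x|}d|x|$, $ds=e^{-\epsilon|x|}d|x|$. Given a Borel $\rho:[0,\infty)\to(0,\infty)$, $\rho\in L^1_{\rm loc}$, $d\mu(x)=\rho(|x|)(\nu(B_{v_1})+\nu(B_{v_2}))\,d|x|$ for $x$ interior to the edge $[v_1,v_2]$.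 The boundary of $(X,d)$ is identified with $Z$. For $\xi\in Z$, $A_n(\xi)=A_n\cap\mathbb B_Z(\xi,\alpha^{-n})$, $V_n(\xi)=\{(x,n):x\in A_n(\xi)\}$; a geodesic ray $[v_0,\xi)=\bigcup_{n\ge0}[v_n(\xi),v_{n+1}(\xi)]$ with $v_n(\xi)\in V_n(\xi)$. $\mathscr Tu$ exists if for $\nu$-a.e. $\xi$ the limit of $u(x)$ as $x\to\xi$ along $[v_0,\xi)$ exists for every geodesic ray and is ray-independent. $\widetilde u$ exists if $\lim_n u_n(\xi)$ exists for $\nu$-a.e. $\xi$, where $u_n(\xi)=\frac1{\#A_n(\xi)}\sum_{z\in A_n(\xi)}u((z,n))$. Upper gradients: Borel $g\ge0$ with $|u(x)-u(y)|\le\int_\gamma g\,ds$ for each nonconstant compact rectifiable curve $\gamma$ with endpoints $x,y$. $N^{1,p}(X)$: $u\in L^p(X,\mu)$ with an upper gradient in $L^p(X,\mu)$, norm $\|u\|_{L^p}+\inf_g\|g\|_{L^p}$. *)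

theory Defs
  imports "HOL-Analysis.Analysis"
begin

definition ballZ :: "'z::metric_space set \<Rightarrow> 'z \<Rightarrow> real \<Rightarrow> 'z set" where
  "ballZ Z x r = ball x r \<inter> Z"

definition separated :: "real \<Rightarrow> 'z::metric_space set \<Rightarrow> bool" where
  "separated r S \<longleftrightarrow> (\<forall>x\<in>S. \<forall>y\<in>S. x \<noteq> y \<longrightarrow> r \<le> dist x y)"

definition max_separated :: "'z::metric_space set \<Rightarrow> real \<Rightarrow> 'z set \<Rightarrow> bool" where
  "max_separated Z r S \<longleftrightarrow> S \<subseteq> Z \<and> separated r S \<and>
     (\<forall>T. S \<subseteq> T \<and> T \<subseteq> Z \<and> separated r T \<longrightarrow> T = S)"

definition doubling_on :: "'z::metric_space set \<Rightarrow> 'z measure \<Rightarrow> bool" where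
  "doubling_on Z \<nu> \<longleftrightarrow> (\<exists>C::real. \<forall>x\<in>Z. \<forall>r>0.
      0 < emeasure \<nu> (ballZ Z x r) \<and> emeasure \<nu> (ballZ Z x r) < \<infinity> \<and>
      emeasure \<nu> (ballZ Z x (2 * r)) \<le> ennreal C * emeasure \<nu> (ballZ Z x r))"

text \<open>A point of the metric graph is represented by its barycentric coordinates:
  a vertex v is the indicator function of v, a point of the edge [a,b] at distance t
  from a is (1-t) vtx a + t vtx b.\<close>

definition vtx :: "'v \<Rightarrow> ('v \<Rightarrow> real)" where
  "vtx v = (\<lambda>w. if w = v then 1 else 0)"

definition edge_pt :: "'v \<Rightarrow> 'v \<Rightarrow> real \<Rightarrow> ('v \<Rightarrow> real)" where
  "edge_pt a b t = (\<lambda>w. (1 - t) * vtx a w + t * vtx b w)"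

definition realization :: "'v set \<Rightarrow> ('v \<Rightarrow> 'v \<Rightarrow> bool) \<Rightarrow> ('v \<Rightarrow> real) set" where
  "realization V E = vtx ` V \<union> {edge_pt a b t | a b t. E a b \<and> 0 < t \<and> t < 1}"

definition supp :: "('v \<Rightarrow> real) \<Rightarrow> 'v set" where
  "supp x = {w. x w \<noteq> 0}"

definition gdist :: "('v \<Rightarrow> 'v \<Rightarrow> bool) \<Rightarrow> 'v \<Rightarrow> 'v \<Rightarrow> nat" where
  "gdist E v w = (LEAST k. \<exists>f. f 0 = v \<and> f k = w \<and> (\<forall>i<k. E (f i) (f (Suc i))))"

text \<open>Distance |x| from the root v0 in the metric graph with unit-length edges.\<close>
definition hgt :: "('v \<Rightarrow> 'v \<Rightarrow> bool) \<Rightarrow> 'v \<Rightarrow> ('v \<Rightarrow> real) \<Rightarrow> real" where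
  "hgt E v0 x = Min {(1 - x a) + real (gdist E v0 a) | a. a \<in> supp x}"

text \<open>Path metric of the metric graph with unit-length edges.\<close>
definition gmetric :: "('v \<Rightarrow> 'v \<Rightarrow> bool) \<Rightarrow> ('v \<Rightarrow> real) \<Rightarrow> ('v \<Rightarrow> real) \<Rightarrow> real" where
  "gmetric E x y =
     (if \<exists>a b. (a = b \<or> E a b) \<and> supp x \<union> supp y \<subseteq> {a, b}
      then (\<Sum>w\<in>supp x \<union> supp y. \<bar>x w - y w\<bar>) / 2
      else Min {(1 - x a) + real (gdist E a b) + (1 - y b) | a b. a \<in> supp x \<and> b \<in> supp y})"

definition mopen :: "'p set \<Rightarrow> ('p \<Rightarrow> 'p \<Rightarrow> real) \<Rightarrow> 'p set \<Rightarrow> bool" where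
  "mopen X dm S \<longleftrightarrow> S \<subseteq> X \<and> (\<forall>x\<in>S. \<exists>r>0. \<forall>y\<in>X. dm x y < r \<longrightarrow> y \<in> S)"

definition mborel :: "'p set \<Rightarrow> ('p \<Rightarrow> 'p \<Rightarrow> real) \<Rightarrow> 'p measure" where
  "mborel X dm = sigma X {S. mopen X dm S}"

definition curve_cont :: "('p \<Rightarrow> 'p \<Rightarrow> real) \<Rightarrow> (real \<Rightarrow> 'p) \<Rightarrow> real \<Rightarrow> real \<Rightarrow> bool" where
  "curve_cont dm \<gamma> a b \<longleftrightarrow> (\<forall>t\<in>{a..b}. \<forall>e>0. \<exists>\<delta>>0. \<forall>s\<in>{a..b}.
      \<bar>s - t\<bar> < \<delta> \<longrightarrow> dm (\<gamma> s) (\<gamma> t) < e)"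

definition curve_length :: "('p \<Rightarrow> 'p \<Rightarrow> real) \<Rightarrow> (real \<Rightarrow> 'p) \<Rightarrow> real \<Rightarrow> real \<Rightarrow> ennreal" where
  "curve_length dm \<gamma> a b =
     (SUP P \<in> {(n, ts). ts 0 = a \<and> ts n = b \<and> (\<forall>i<n. ts i \<le> ts (Suc i))}.
        ennreal (\<Sum>i<fst P. dm (\<gamma> (snd P i)) (\<gamma> (snd P (Suc i)))))"

definition arc_param :: "('p \<Rightarrow> 'p \<Rightarrow> real) \<Rightarrow> (real \<Rightarrow> 'p) \<Rightarrow> real \<Rightarrow> real \<Rightarrow> real \<Rightarrow> 'p" where
  "arc_param dm \<gamma> a b \<sigma> = \<gamma> (SOME t. t \<in> {a..b} \<and> curve_length dm \<gamma> a t = ennreal \<sigma>)"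

definition line_int :: "('p \<Rightarrow> 'p \<Rightarrow> real) \<Rightarrow> (real \<Rightarrow> 'p) \<Rightarrow> real \<Rightarrow> real \<Rightarrow> ('p \<Rightarrow> ennreal) \<Rightarrow> ennreal" where
  "line_int dm \<gamma> a b h =
     (\<integral>\<^sup>+ \<sigma>. h (arc_param dm \<gamma> a b \<sigma>) * indicator {0..enn2real (curve_length dm \<gamma> a b)} \<sigma> \<partial>lborel)"

section \<open>The hyperbolic filling\<close>

definition fV :: "(nat \<Rightarrow> 'z set) \<Rightarrow> ('z \<times> nat) set" where
  "fV A = {(x, n). x \<in> A n}"

definition fE :: "'z::metric_space set \<Rightarrow> (nat \<Rightarrow> 'z set) \<Rightarrow> real \<Rightarrow> real \<Rightarrow> ('z \<times> nat) \<Rightarrow> ('z \<times> nat) \<Rightarrow> bool" where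
  "fE Z A \<alpha> \<tau> v w \<longleftrightarrow> v \<in> fV A \<and> w \<in> fV A \<and> v \<noteq> w \<and>
     (let x = fst v; n = snd v; y = fst w; m = snd w; k = \<bar>real n - real m\<bar> in
        k \<le> 1 \<and>
        ballZ Z x (\<tau> powr (1 - k) * (1 / \<alpha>) ^ n) \<inter> ballZ Z y (\<tau> powr (1 - k) * (1 / \<alpha>) ^ m) \<noteq> {})"

definition fX :: "'z::metric_space set \<Rightarrow> (nat \<Rightarrow> 'z set) \<Rightarrow> real \<Rightarrow> real \<Rightarrow> (('z \<times> nat) \<Rightarrow> real) set" where
  "fX Z A \<alpha> \<tau> = realization (fV A) (fE Z A \<alpha> \<tau>)"

definition fhgt :: "'z::metric_space set \<Rightarrow> (nat \<Rightarrow> 'z set) \<Rightarrow> real \<Rightarrow> real \<Rightarrow> 'z \<Rightarrow> (('z \<times> nat) \<Rightarrow> real) \<Rightarrow> real" where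
  "fhgt Z A \<alpha> \<tau> z0 x = hgt (fE Z A \<alpha> \<tau>) (z0, 0) x"

definition fdX :: "'z::metric_space set \<Rightarrow> (nat \<Rightarrow> 'z set) \<Rightarrow> real \<Rightarrow> real \<Rightarrow> (('z \<times> nat) \<Rightarrow> real) \<Rightarrow> (('z \<times> nat) \<Rightarrow> real) \<Rightarrow> real" where
  "fdX Z A \<alpha> \<tau> = gmetric (fE Z A \<alpha> \<tau>)"

definition Bv :: "'z::metric_space set \<Rightarrow> real \<Rightarrow> ('z \<times> nat) \<Rightarrow> 'z set" where
  "Bv Z \<alpha> v = ballZ Z (fst v) ((1 / \<alpha>) ^ snd v)"

text \<open>Integral of a nonnegative function against
  d mu(x) = rho(|x|) (nu(B_v1) + nu(B_v2)) d|x| on the interior of each edge [v1,v2].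
  The sum is over ordered pairs, hence the factor 1/2.\<close>
definition mu_int :: "'z::metric_space set \<Rightarrow> (nat \<Rightarrow> 'z set) \<Rightarrow> real \<Rightarrow> real \<Rightarrow> 'z \<Rightarrow> 'z measure \<Rightarrow>
    (real \<Rightarrow> real) \<Rightarrow> ((('z \<times> nat) \<Rightarrow> real) \<Rightarrow> ennreal) \<Rightarrow> ennreal" where
  "mu_int Z A \<alpha> \<tau> z0 \<nu> \<rho> f =
     (\<integral>\<^sup>+ e. (\<integral>\<^sup>+ t. f (edge_pt (fst e) (snd e) t)
            * ennreal (\<rho> (fhgt Z A \<alpha> \<tau> z0 (edge_pt (fst e) (snd e) t)))
            * (emeasure \<nu> (Bv Z \<alpha> (fst e)) + emeasure \<nu> (Bv Z \<alpha> (snd e)))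
            * indicator {0<..<1} t \<partial>lborel)
        \<partial>count_space {(a, b). fE Z A \<alpha> \<tau> a b}) / 2"

definition ennpow :: "ennreal \<Rightarrow> real \<Rightarrow> ennreal" where
  "ennpow x p = (if x = \<infinity> then \<infinity> else ennreal (enn2real x powr p))"

text \<open>Upper gradient with respect to ds = exp(-eps |x|) d|x|, eps = ln alpha.\<close>
definition upper_gradient :: "'z::metric_space set \<Rightarrow> (nat \<Rightarrow> 'z set) \<Rightarrow> real \<Rightarrow> real \<Rightarrow> 'z \<Rightarrow>
    ((('z \<times> nat) \<Rightarrow> real) \<Rightarrow> real) \<Rightarrow> ((('z \<times> nat) \<Rightarrow> real) \<Rightarrow> ennreal) \<Rightarrow> bool" where
  "upper_gradient Z A \<alpha> \<tau> z0 u g \<longleftrightarrow>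
     (\<forall>\<gamma> a b. a < b \<and> (\<forall>t\<in>{a..b}. \<gamma> t \<in> fX Z A \<alpha> \<tau>) \<and> curve_cont (fdX Z A \<alpha> \<tau>) \<gamma> a b
        \<and> curve_length (fdX Z A \<alpha> \<tau>) \<gamma> a b < \<infinity> \<and> (\<exists>s\<in>{a..b}. \<exists>t\<in>{a..b}. \<gamma> s \<noteq> \<gamma> t)
      \<longrightarrow> ennreal \<bar>u (\<gamma> a) - u (\<gamma> b)\<bar>
            \<le> line_int (fdX Z A \<alpha> \<tau>) \<gamma> a b
                 (\<lambda>x. g x * ennreal (exp (- ln \<alpha> * fhgt Z A \<alpha> \<tau> z0 x))))"

definition N1p :: "'z::metric_space set \<Rightarrow> (nat \<Rightarrow> 'z set) \<Rightarrow> real \<Rightarrow> real \<Rightarrow> 'z \<Rightarrow> 'z measure \<Rightarrow>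
    (real \<Rightarrow> real) \<Rightarrow> real \<Rightarrow> ((('z \<times> nat) \<Rightarrow> real) \<Rightarrow> real) \<Rightarrow> bool" where
  "N1p Z A \<alpha> \<tau> z0 \<nu> \<rho> p u \<longleftrightarrow>
     u \<in> borel_measurable (mborel (fX Z A \<alpha> \<tau>) (fdX Z A \<alpha> \<tau>)) \<and>
     mu_int Z A \<alpha> \<tau> z0 \<nu> \<rho> (\<lambda>x. ennreal (\<bar>u x\<bar> powr p)) < \<infinity> \<and>
     (\<exists>g. g \<in> borel_measurable (mborel (fX Z A \<alpha> \<tau>) (fdX Z A \<alpha> \<tau>)) \<and>
          upper_gradient Z A \<alpha> \<tau> z0 u g \<and>
          mu_int Z A \<alpha> \<tau> z0 \<nu> \<rho> (\<lambda>x. ennpow (g x) p) < \<infinity>)"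

definition A_xi :: "(nat \<Rightarrow> 'z::metric_space set) \<Rightarrow> real \<Rightarrow> 'z \<Rightarrow> nat \<Rightarrow> 'z set" where
  "A_xi A \<alpha> \<xi> n = {z \<in> A n. dist z \<xi> < (1 / \<alpha>) ^ n}"

definition ray_pt :: "(nat \<Rightarrow> 'z) \<Rightarrow> real \<Rightarrow> (('z \<times> nat) \<Rightarrow> real)" where
  "ray_pt xs r = (let n = nat \<lfloor>r\<rfloor> in edge_pt (xs n, n) (xs (Suc n), Suc n) (r - real n))"

definition trace_T_exists :: "'z measure \<Rightarrow> (nat \<Rightarrow> 'z::metric_space set) \<Rightarrow> real \<Rightarrow>
    ((('z \<times> nat) \<Rightarrow> real) \<Rightarrow> real) \<Rightarrow> bool" where
  "trace_T_exists \<nu> A \<alpha> u \<longleftrightarrow>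
     (AE \<xi> in \<nu>. \<exists>L. \<forall>xs. (\<forall>n. xs n \<in> A_xi A \<alpha> \<xi> n) \<longrightarrow>
        ((\<lambda>r. u (ray_pt xs r)) \<longlongrightarrow> L) at_top)"

definition avg_n :: "(nat \<Rightarrow> 'z::metric_space set) \<Rightarrow> real \<Rightarrow> ((('z \<times> nat) \<Rightarrow> real) \<Rightarrow> real) \<Rightarrow> 'z \<Rightarrow> nat \<Rightarrow> real" where
  "avg_n A \<alpha> u \<xi> n = (\<Sum>z\<in>A_xi A \<alpha> \<xi> n. u (vtx (z, n))) / real (card (A_xi A \<alpha> \<xi> n))"

definition trace_tilde_exists :: "'z measure \<Rightarrow> (nat \<Rightarrow> 'z::metric_space set) \<Rightarrow> real \<Rightarrow>
    ((('z \<times> nat) \<Rightarrow> real) \<Rightarrow> real) \<Rightarrow> bool" where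
  "trace_tilde_exists \<nu> A \<alpha> u \<longleftrightarrow> (AE \<xi> in \<nu>. convergent (\<lambda>n. avg_n A \<alpha> u \<xi> n))"

end

theory Submission
  imports Defs
begin

lemma lip_meas:
  fixes f :: "'p \<Rightarrow> real"
  assumes lip: "\<And>x y. x \<in> Xs \<Longrightarrow> y \<in> Xs \<Longrightarrow> \<bar>f x - f y\<bar> \<le> K * dm x y" and K: "K > 0"
  shows "f \<in> borel_measurable (mborel Xs dm)"
proof (rule borel_measurableI)
  have P: "{S. mopen Xs dm S} \<subseteq> Pow Xs" by (auto simp: mopen_def)
  have sp: "space (mborel Xs dm) = Xs" unfolding mborel_def by (rule space_measure_of[OF P])
  fix S :: "real set" assume S: "open S"
  have "mopen Xs dm (f -` S \<inter> Xs)"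
    unfolding mopen_def
  proof (intro conjI ballI)
    fix x assume x: "x \<in> f -` S \<inter> Xs"
    obtain e where e: "e > 0" "ball (f x) e \<subseteq> S" using S x open_contains_ball by blast
    show "\<exists>r>0. \<forall>y\<in>Xs. dm x y < r \<longrightarrow> y \<in> f -` S \<inter> Xs"
    proof (intro exI[of _ "e / K"] conjI ballI impI)
      show "e / K > 0" using e K by simp
      fix y assume y: "y \<in> Xs" "dm x y < e / K"
      have "\<bar>f x - f y\<bar> \<le> K * dm x y" using lip x y by auto
      also have "\<dots> < e" using y K by (simp add: field_simps)
      finally have "f y \<in> ball (f x) e" by (simp add: dist_real_def)
      thus "y \<in> f -` S \<inter> Xs" using e y by auto
    qed
  qed auto
  hence "f -` S \<inter> Xs \<in> sigma_sets Xs {S. mopen Xs dm S}" by (auto intro: sigma_sets.Basic)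
  thus "f -` S \<inter> space (mborel Xs dm) \<in> sets (mborel Xs dm)"
    unfolding sp unfolding mborel_def sets_measure_of[OF P] .
qed


lemma summ_aux:
  fixes Q c :: real and K :: nat
  assumes Q: "Q \<ge> 1" and c: "c \<ge> 0"
  shows "summable (\<lambda>m::nat. c * exp (- ((real m)^2)) * ((real m + 2) * Q^((m+1)*K+1))^2)"
proof -
  define L where "L = ln Q"
  have L0: "L \<ge> 0" using Q by (simp add: L_def)
  have Qp: "\<And>j. Q^j = exp (real j * L)" using Q by (simp add: L_def exp_of_nat_mult)
  define a where "a = 2 + 2 * real K * L"
  define b where "b = 2 + 2 * (real K + 1) * L"
  have a0: "a \<ge> 0" and b0: "b \<ge> 0" using L0 by (auto simp: a_def b_def)
  have bnd: "c * exp (- ((real m)^2)) * ((real m + 2) * Q^((m+1)*K+1))^2 \<le> c * exp (a * real m + b - (real m)^2)" for m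
  proof -
    have m2: "real m + 2 \<le> exp (real m + 1)" using exp_ge_add_one_self[of "real m + 1"] by simp
    have "((real m + 2) * Q^((m+1)*K+1))^2 = (real m + 2)^2 * (Q^((m+1)*K+1))^2" by (simp add: power_mult_distrib)
    also have "\<dots> \<le> (exp (real m + 1))^2 * (Q^((m+1)*K+1))^2"
      using m2 by (intro mult_right_mono power_mono) auto
    also have "\<dots> = exp (a * real m + b)"
      unfolding Qp by (simp add: exp_add[symmetric] power2_eq_square a_def b_def algebra_simps)
    finally have "((real m + 2) * Q^((m+1)*K+1))^2 \<le> exp (a * real m + b)" .
    hence "c * exp (- ((real m)^2)) * ((real m + 2) * Q^((m+1)*K+1))^2 \<le> c * exp (- ((real m)^2)) * exp (a * real m + b)"
      using c by (intro mult_left_mono) auto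
    also have "\<dots> = c * exp (a * real m + b - (real m)^2)" by (simp add: exp_add[symmetric] mult.assoc)
    finally show ?thesis .
  qed
  have ev: "eventually (\<lambda>m. norm (c * exp (- ((real m)^2)) * ((real m + 2) * Q^((m+1)*K+1))^2) \<le> c * exp (-1) ^ m) sequentially"
  proof (rule eventually_sequentiallyI[where c="nat \<lceil>a + b + 1\<rceil>"])
    fix m assume m: "nat \<lceil>a + b + 1\<rceil> \<le> m"
    hence mr: "a + b + 1 \<le> real m" by linarith
    hence m1: "1 \<le> real m" using a0 b0 by linarith
    have "(a + b + 1) * real m \<le> real m * real m" using mr m1 by (intro mult_right_mono) auto
    moreover have "b \<le> b * real m" using b0 m1 by (simp add: mult_le_cancel_left1)
    ultimately have ex: "a * real m + b - (real m)^2 \<le> - real m" by (simp add: power2_eq_square algebra_simps)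
    have "norm (c * exp (- ((real m)^2)) * ((real m + 2) * Q^((m+1)*K+1))^2) = c * exp (- ((real m)^2)) * ((real m + 2) * Q^((m+1)*K+1))^2"
      using c by simp
    also have "\<dots> \<le> c * exp (a * real m + b - (real m)^2)" by (rule bnd)
    also have "\<dots> \<le> c * exp (- real m)" using ex c by (intro mult_left_mono) auto
    also have "\<dots> = c * exp (-1) ^ m" by (simp add: exp_of_nat_mult[symmetric])
    finally show "norm (c * exp (- ((real m)^2)) * ((real m + 2) * Q^((m+1)*K+1))^2) \<le> c * exp (-1) ^ m" .
  qed
  have "summable (\<lambda>m::nat. c * exp (-1) ^ m)" by (intro summable_mult summable_geometric) simp
  with ev show ?thesis by (rule summable_comparison_test_ev)
qed

locale S =
  fixes Z :: "'z::metric_space set" and \<nu> :: "'z measure"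
    and \<alpha> \<tau> p :: real and z0 :: 'z and A :: "nat \<Rightarrow> 'z set"
  assumes cZ: "compact Z" and dpos: "0 < diameter Z" and dlt: "diameter Z < 1"
    and snu: "sets \<nu> = sets (restrict_space borel Z)" and dbl: "doubling_on Z \<nu>"
    and a1: "\<alpha> > 1" and t1: "\<tau> > 1" and z0Z: "z0 \<in> Z"
    and A0: "A 0 = {z0}"
    and Amax: "\<And>n. n \<ge> 1 \<Longrightarrow> max_separated Z ((1 / \<alpha>) ^ n) (A n)"
    and Amono: "\<And>n m. n < m \<Longrightarrow> A n \<subseteq> A m"
    and p1: "1 \<le> p"
begin

lemma spaceZ: "space \<nu> = Z"
  using sets_eq_imp_space_eq[OF snu] by (simp add: space_restrict_space)

lemma distZ: "x \<in> Z \<Longrightarrow> y \<in> Z \<Longrightarrow> dist x y < 1"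
  using diameter_bounded_bound[of Z x y] compact_imp_bounded[OF cZ] dlt by linarith

lemma AZ: assumes "x \<in> A n" shows "x \<in> Z"
proof (cases "n = 0")
  case True thus ?thesis using A0 z0Z assms by simp
next
  case False thus ?thesis using Amax[of n] assms unfolding max_separated_def by auto
qed

lemma Amono': "j \<le> k \<Longrightarrow> A j \<subseteq> A k"
  using Amono by (cases "j = k") auto

lemma cover: assumes "\<xi> \<in> Z" shows "\<exists>z\<in>A n. dist z \<xi> < (1/\<alpha>)^n"
proof (cases "n = 0")
  case True thus ?thesis using A0 distZ[OF z0Z assms] by auto
next
  case False
  hence ms: "max_separated Z ((1 / \<alpha>) ^ n) (A n)" using Amax by auto
  show ?thesis
  proof (rule ccontr)
    assume "\<not> ?thesis"
    hence far: "\<forall>z\<in>A n. (1/\<alpha>)^n \<le> dist z \<xi>" by (auto simp: not_less)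
    have "separated ((1 / \<alpha>) ^ n) (insert \<xi> (A n))"
      using ms far unfolding max_separated_def separated_def by (auto simp: dist_commute)
    hence "insert \<xi> (A n) = A n" using ms assms unfolding max_separated_def by blast
    hence "\<xi> \<in> A n" by auto
    with far have "(1/\<alpha>)^n \<le> 0" by auto
    moreover have "(1/\<alpha>)^n > 0" using a1 by simp
    ultimately show False by simp
  qed
qed

abbreviation "E \<equiv> fE Z A \<alpha> \<tau>"
abbreviation "V \<equiv> fV A"
abbreviation "X \<equiv> fX Z A \<alpha> \<tau>"
abbreviation "v0 \<equiv> (z0, 0::nat)"
abbreviation "D \<equiv> gdist E v0"

lemma inV: "(x, n) \<in> V \<longleftrightarrow> x \<in> A n" by (simp add: fV_def)

lemma E_imp: assumes "E v w"
  shows "v \<in> V" "w \<in> V" "v \<noteq> w" "\<bar>real (snd v) - real (snd w)\<bar> \<le> 1"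
  using assms unfolding fE_def Let_def by auto

lemma E_sym: assumes "E v w" shows "E w v"
  using assms unfolding fE_def Let_def by (auto simp: abs_minus_commute Int_commute)

lemma E_up: assumes "x \<in> A (Suc n)" "y \<in> A n" "dist y x < (1/\<alpha>)^n"
  shows "E (y, n) (x, Suc n)"
proof -
  have xZ: "x \<in> Z" using AZ assms(1) .
  have "x \<in> ballZ Z y (\<tau> powr (1 - 1) * (1 / \<alpha>) ^ n)"
    using assms xZ t1 by (simp add: ballZ_def)
  moreover have "x \<in> ballZ Z x (\<tau> powr (1 - 1) * (1 / \<alpha>) ^ Suc n)"
    using xZ t1 a1 by (simp add: ballZ_def)
  ultimately show ?thesis using assms unfolding fE_def Let_def
    by (auto simp: fV_def)
qed

definition walk :: "nat \<Rightarrow> (nat \<Rightarrow> 'z \<times> nat) \<Rightarrow> 'z \<times> nat \<Rightarrow> 'z \<times> nat \<Rightarrow> bool" where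
  "walk k f a b \<longleftrightarrow> f 0 = a \<and> f k = b \<and> (\<forall>i<k. E (f i) (f (Suc i)))"

lemma gdist_walk: "gdist E a b = (LEAST k. \<exists>f. walk k f a b)"
  unfolding gdist_def walk_def by simp

lemma walk_exists: assumes "x \<in> A n" shows "\<exists>f. walk n f v0 (x, n)"
  using assms
proof (induction n arbitrary: x)
  case 0 thus ?case using A0 by (auto simp: walk_def intro: exI[of _ "\<lambda>_. v0"])
next
  case (Suc n)
  obtain y where y: "y \<in> A n" "dist y x < (1/\<alpha>)^n" using cover[OF AZ[OF Suc.prems]] by auto
  obtain f where f: "walk n f v0 (y, n)" using Suc.IH[OF y(1)] by auto
  define g where "g = (\<lambda>i. if i \<le> n then f i else (x, Suc n))"
  have "E (y, n) (x, Suc n)" using E_up[OF Suc.prems y] .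
  hence "walk (Suc n) g v0 (x, Suc n)" using f unfolding walk_def g_def
    by (auto simp: less_Suc_eq)
  thus ?case by blast
qed

lemma walk_lower: assumes "walk k f a b" shows "snd b \<le> snd a + k"
proof -
  have "\<forall>i\<le>k. snd (f i) \<le> snd a + i"
  proof (intro allI impI)
    fix i assume "i \<le> k" thus "snd (f i) \<le> snd a + i"
    proof (induction i)
      case 0 thus ?case using assms by (simp add: walk_def)
    next
      case (Suc i)
      hence "E (f i) (f (Suc i))" using assms by (simp add: walk_def)
      from E_imp(4)[OF this] Suc show ?case by auto
    qed
  qed
  thus ?thesis using assms unfolding walk_def by (metis order_refl)
qed

lemma D_eq: assumes "v \<in> V" shows "D v = snd v"
proof -
  obtain x n where v: "v = (x, n)" "x \<in> A n" using assms by (cases v) (auto simp: fV_def)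
  obtain f where f: "walk n f v0 v" using walk_exists[OF v(2)] v by auto
  show ?thesis unfolding gdist_walk
  proof (rule Least_equality)
    show "\<exists>f. walk (snd v) f v0 v" using f v by auto
  next
    fix k assume "\<exists>f. walk k f v0 v"
    thus "snd v \<le> k" using walk_lower by fastforce
  qed
qed

lemma walk_rev: assumes "walk k f a b" shows "walk k (\<lambda>i. f (k - i)) b a"
  using assms unfolding walk_def
proof (intro conjI allI impI)
  fix i assume w: "f 0 = a \<and> f k = b \<and> (\<forall>i<k. E (f i) (f (Suc i)))" and i: "i < k"
  have "E (f (k - Suc i)) (f (Suc (k - Suc i)))" using w i by auto
  moreover have "Suc (k - Suc i) = k - i" using i by auto
  ultimately show "E (f (k - i)) (f (k - Suc i))" using E_sym by auto
qed auto

lemma walk_app: assumes "walk k f a b" "walk l g b c"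
  shows "walk (k + l) (\<lambda>i. if i \<le> k then f i else g (i - k)) a c"
  using assms unfolding walk_def
proof (intro conjI allI impI)
  fix i assume w: "f 0 = a \<and> f k = b \<and> (\<forall>i<k. E (f i) (f (Suc i)))"
    and w2: "g 0 = b \<and> g l = c \<and> (\<forall>i<l. E (g i) (g (Suc i)))" and i: "i < k + l"
  show "E (if i \<le> k then f i else g (i - k)) (if Suc i \<le> k then f (Suc i) else g (Suc i - k))"
  proof (cases "i < k")
    case True thus ?thesis using w by auto
  next
    case False
    hence "Suc i - k = Suc (i - k)" "i - k < l" using i by auto
    moreover have "(if i \<le> k then f i else g (i - k)) = g (i - k)" using False w w2 by auto
    ultimately show ?thesis using w2 False by auto
  qed
qed auto

lemma walk_V: assumes "v \<in> V" "w \<in> V" shows "\<exists>k f. walk k f v w"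
proof -
  obtain f where f: "walk (snd v) f v0 v" using walk_exists[of "fst v" "snd v"] assms
    by (cases v) (auto simp: fV_def)
  obtain g where g: "walk (snd w) g v0 w" using walk_exists[of "fst w" "snd w"] assms
    by (cases w) (auto simp: fV_def)
  show ?thesis using walk_app[OF walk_rev[OF f] g] by blast
qed

lemma gd_walk: assumes "v \<in> V" "w \<in> V" shows "\<exists>f. walk (gdist E v w) f v w"
proof -
  obtain k where "\<exists>f. walk k f v w" using walk_V[OF assms] by blast
  thus ?thesis unfolding gdist_walk by (rule LeastI[where P="\<lambda>k. \<exists>f. walk k f v w"])
qed

lemma gd_le: assumes "walk k f v w" shows "gdist E v w \<le> k"
  unfolding gdist_walk by (rule Least_le[where P="\<lambda>k. \<exists>f. walk k f v w"]) (use assms in blast)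

lemma v0V: "v0 \<in> V" by (simp add: fV_def A0)

lemma tri1: assumes "a \<in> V" "b \<in> V" shows "D b \<le> D a + gdist E a b"
proof -
  obtain f where f: "walk (D a) f v0 a" using gd_walk[OF v0V assms(1)] by (auto simp: fV_def A0)
  obtain g where g: "walk (gdist E a b) g a b" using gd_walk[OF assms] by auto
  show ?thesis using gd_le[OF walk_app[OF f g]] .
qed

lemma tri2: assumes "a \<in> V" "b \<in> V" shows "D a \<le> D b + gdist E a b"
proof -
  obtain f where f: "walk (D b) f v0 b" using gd_walk[OF v0V assms(2)] by (auto simp: fV_def A0)
  obtain g where g: "walk (gdist E a b) g a b" using gd_walk[OF assms] by auto
  show ?thesis using gd_le[OF walk_app[OF f walk_rev[OF g]]] .
qed

lemma gd_pos: assumes "a \<in> V" "b \<in> V" "a \<noteq> b" shows "gdist E a b \<ge> 0" by simp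

lemma vtx_supp[simp]: "supp (vtx v) = {v}" by (auto simp: supp_def vtx_def)
lemma vtx_at[simp]: "vtx v v = 1" by (simp add: vtx_def)

lemma edge_val: assumes "a \<noteq> b"
  shows "edge_pt a b t a = 1 - t" "edge_pt a b t b = t" "w \<noteq> a \<Longrightarrow> w \<noteq> b \<Longrightarrow> edge_pt a b t w = 0"
  using assms by (auto simp: edge_pt_def vtx_def)

lemma edge_supp: assumes "a \<noteq> b" "0 < t" "t < 1" shows "supp (edge_pt a b t) = {a, b}"
  using assms by (auto simp: supp_def edge_pt_def vtx_def)

lemma X_cases: assumes "x \<in> X"
  obtains (vert) v where "v \<in> V" "x = vtx v"
    | (edge) a b t where "E a b" "0 < t" "t < 1" "x = edge_pt a b t"
  using assms unfolding fX_def realization_def by blast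

lemma supp_out: "w \<notin> supp x \<Longrightarrow> x w = 0" by (simp add: supp_def)

lemma F1_all: assumes "x \<in> X"
  shows "finite (supp x) \<and> supp x \<noteq> {} \<and> supp x \<subseteq> V \<and> (\<forall>w \<in> supp x. 0 < x w \<and> x w \<le> 1)"
  using assms
proof (cases rule: X_cases)
  case (vert v) thus ?thesis by simp
next
  case (edge a b t)
  note ab = E_imp[OF edge(1)]
  thus ?thesis using edge ab edge_supp[of a b t] edge_val[where a=a and b=b and t=t] by auto
qed

lemma F1: assumes "x \<in> X"
  shows "finite (supp x)" "supp x \<noteq> {}" "supp x \<subseteq> V" "\<And>w. w \<in> supp x \<Longrightarrow> 0 < x w \<and> x w \<le> 1"
  using F1_all[OF assms] by auto

lemma F2_all: assumes "x \<in> X" "a \<in> supp x" "b \<in> supp x" "a \<noteq> b"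
  shows "x a + x b = 1 \<and> E a b"
  using assms(1)
proof (cases rule: X_cases)
  case (vert v) thus ?thesis using assms by simp
next
  case (edge c d t)
  note cd = E_imp[OF edge(1)]
  have s: "{a, b} = {c, d}" using assms edge edge_supp[OF cd(3) edge(2,3)] by auto
  have "E d c" using E_sym[OF edge(1)] .
  thus ?thesis using s edge edge_val[OF cd(3), where t=t] assms(4) by (auto simp: doubleton_eq_iff)
qed

lemma F2: assumes "x \<in> X" "a \<in> supp x" "b \<in> supp x" "a \<noteq> b"
  shows "x a + x b = 1" "E a b" using F2_all[OF assms] by auto

lemma F3: assumes "x \<in> X" "supp x = {b}" shows "x b = 1"
  using assms(1)
proof (cases rule: X_cases)
  case (vert v) thus ?thesis using assms by simp
next
  case (edge c d t)
  note cd = E_imp[OF edge(1)]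
  have "{c, d} = {b}" using assms edge edge_supp[OF cd(3) edge(2,3)] by auto
  thus ?thesis using cd(3) by (auto simp: doubleton_eq_iff)
qed

definition uu :: "('z \<times> nat \<Rightarrow> real) \<Rightarrow> real" where
  "uu x = 1 - Max (x ` supp x)"

lemma Mx: assumes "x \<in> X"
  shows "Max (x ` supp x) \<in> x ` supp x" "\<And>w. w \<in> supp x \<Longrightarrow> x w \<le> Max (x ` supp x)"
    "Max (x ` supp x) \<le> 1" "0 < Max (x ` supp x)"
proof -
  note f = F1[OF assms]
  show "Max (x ` supp x) \<in> x ` supp x" using f by simp
  show "\<And>w. w \<in> supp x \<Longrightarrow> x w \<le> Max (x ` supp x)" using f by simp
  show "Max (x ` supp x) \<le> 1" using f by (subst Max_le_iff) auto
  obtain w where "w \<in> supp x" using f by auto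
  thus "0 < Max (x ` supp x)" using f by (subst Max_gr_iff) auto
qed

lemma uu_vtx[simp]: "uu (vtx v) = 0" by (simp add: uu_def)

lemma uu_edge: assumes "a \<noteq> b" "0 < t" "t < 1" shows "uu (edge_pt a b t) = 1 - max (1 - t) t"
  using assms by (simp add: uu_def edge_supp edge_val)

lemma maxdiff: assumes "x \<in> X" "y \<in> X"
  shows "Max (x ` supp x) - Max (y ` supp y) \<le> (\<Sum>w\<in>supp x \<union> supp y. \<bar>x w - y w\<bar>)"
proof -
  obtain w where w: "w \<in> supp x" "x w = Max (x ` supp x)" using Mx(1)[OF assms(1)] by auto
  have "y w \<le> Max (y ` supp y)"
  proof (cases "w \<in> supp y")
    case True thus ?thesis using Mx(2)[OF assms(2)] by auto
  next
    case False thus ?thesis using supp_out[OF False] Mx(4)[OF assms(2)] by simp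
  qed
  moreover have "\<bar>x w - y w\<bar> \<le> (\<Sum>w\<in>supp x \<union> supp y. \<bar>x w - y w\<bar>)"
    by (rule member_le_sum) (use w F1[OF assms(1)] F1[OF assms(2)] in auto)
  ultimately show ?thesis using w by linarith
qed

lemma sum_sym: "(\<Sum>w\<in>supp x \<union> supp y. \<bar>x w - y w\<bar>) = (\<Sum>w\<in>supp y \<union> supp x. \<bar>y w - x w\<bar>)"
  by (simp add: Un_commute abs_minus_commute)

lemma gm_cases: assumes "x \<in> X" "y \<in> X"
  obtains (one) c d where "c = d \<or> E c d" "supp x \<union> supp y \<subseteq> {c, d}"
       "gmetric E x y = (\<Sum>w\<in>supp x \<union> supp y. \<bar>x w - y w\<bar>) / 2"
    | (two) a b where "a \<in> supp x" "b \<in> supp y" "\<not> (\<exists>c d. (c = d \<or> E c d) \<and> supp x \<union> supp y \<subseteq> {c, d})"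
       "gmetric E x y = (1 - x a) + real (gdist E a b) + (1 - y b)"
proof (cases "\<exists>c d. (c = d \<or> E c d) \<and> supp x \<union> supp y \<subseteq> {c, d}")
  case True thus ?thesis using one unfolding gmetric_def by auto
next
  case False
  let ?S = "{(1 - x a) + real (gdist E a b) + (1 - y b) | a b. a \<in> supp x \<and> b \<in> supp y}"
  have eq: "?S = (\<lambda>(a,b). (1 - x a) + real (gdist E a b) + (1 - y b)) ` (supp x \<times> supp y)" by auto
  have "finite ?S" "?S \<noteq> {}" unfolding eq using F1[OF assms(1)] F1[OF assms(2)] by auto
  hence "Min ?S \<in> ?S" by (rule Min_in)
  then obtain a b where ab: "a \<in> supp x" "b \<in> supp y" "Min ?S = (1 - x a) + real (gdist E a b) + (1 - y b)" by auto
  have "gmetric E x y = Min ?S" using False unfolding gmetric_def by auto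
  thus ?thesis using two[OF ab(1,2) False] ab(3) by auto
qed

lemma uu_nonneg: "x \<in> X \<Longrightarrow> 0 \<le> uu x" using Mx(3) by (simp add: uu_def)
lemma uu_le: "x \<in> X \<Longrightarrow> a \<in> supp x \<Longrightarrow> uu x \<le> 1 - x a" using Mx(2) by (simp add: uu_def)

lemma uu_lip: assumes "x \<in> X" "y \<in> X" shows "\<bar>uu x - uu y\<bar> \<le> 2 * gmetric E x y"
  using assms
proof (cases rule: gm_cases)
  case (one c d)
  have "Max (x ` supp x) - Max (y ` supp y) \<le> (\<Sum>w\<in>supp x \<union> supp y. \<bar>x w - y w\<bar>)"
    by (rule maxdiff[OF assms])
  moreover have "Max (y ` supp y) - Max (x ` supp x) \<le> (\<Sum>w\<in>supp x \<union> supp y. \<bar>x w - y w\<bar>)"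
    using maxdiff[OF assms(2,1)] sum_sym[of y x] by simp
  ultimately show ?thesis using one(3) by (simp add: uu_def)
next
  case (two a b)
  have "uu x \<le> 1 - x a" "uu y \<le> 1 - y b" using uu_le assms two by auto
  moreover have "0 \<le> uu x" "0 \<le> uu y" using uu_nonneg assms by auto
  ultimately show ?thesis using two(4) by simp
qed

abbreviation "H \<equiv> hgt E v0"

lemma Hset: assumes "x \<in> X"
  shows "finite {(1 - x a) + real (D a) | a. a \<in> supp x}" "{(1 - x a) + real (D a) | a. a \<in> supp x} \<noteq> {}"
proof -
  have eq: "{(1 - x a) + real (D a) | a. a \<in> supp x} = (\<lambda>a. (1 - x a) + real (D a)) ` supp x" by auto
  show "finite {(1 - x a) + real (D a) | a. a \<in> supp x}" unfolding eq using F1[OF assms] by simp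
  show "{(1 - x a) + real (D a) | a. a \<in> supp x} \<noteq> {}" using F1[OF assms] by auto
qed

lemma H_le: assumes "x \<in> X" "a \<in> supp x" shows "H x \<le> (1 - x a) + D a"
proof -
  have "(1 - x a) + real (D a) \<in> {(1 - x a) + real (D a) | a. a \<in> supp x}" using assms(2) by blast
  thus ?thesis unfolding hgt_def using Min_le[OF Hset(1)[OF assms(1)]] by blast
qed

lemma H_attain: assumes "x \<in> X" obtains a0 where "a0 \<in> supp x" "H x = (1 - x a0) + D a0"
proof -
  have "H x \<in> {(1 - x a) + real (D a) | a. a \<in> supp x}" unfolding hgt_def using Hset[OF assms] by (rule Min_in)
  thus ?thesis using that by auto
qed

lemma D_adj: assumes "E a b" shows "real (D b) \<le> real (D a) + 1"
  using D_eq[OF E_imp(1)[OF assms]] D_eq[OF E_imp(2)[OF assms]] E_imp(4)[OF assms] by simp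

lemma H_low: assumes "x \<in> X" "a \<in> supp x" shows "real (D a) - (1 - x a) \<le> H x"
proof -
  obtain a0 where a0: "a0 \<in> supp x" "H x = (1 - x a0) + D a0" using H_attain[OF assms(1)] by auto
  show ?thesis
  proof (cases "a0 = a")
    case True thus ?thesis using a0 F1(4)[OF assms] by auto
  next
    case False
    have "x a + x a0 = 1" "E a0 a" using F2[OF assms(1) a0(1) assms(2) False] F2[OF assms(1) assms(2) a0(1)] False by auto
    thus ?thesis using D_adj[of a0 a] a0 by auto
  qed
qed

lemma H_nonneg: assumes "x \<in> X" shows "0 \<le> H x"
proof -
  obtain a0 where a0: "a0 \<in> supp x" "H x = (1 - x a0) + D a0" using H_attain[OF assms] by auto
  thus ?thesis using F1(4)[OF assms a0(1)] by simp
qed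

lemma H_case1: assumes "x \<in> X" "y \<in> X" "c = d \<or> E c d" "supp x \<union> supp y \<subseteq> {c, d}"
  shows "H y \<le> H x + (\<Sum>w\<in>supp x \<union> supp y. \<bar>x w - y w\<bar>)"
proof -
  obtain a0 where a0: "a0 \<in> supp x" "H x = (1 - x a0) + D a0" using H_attain[OF assms(1)] by auto
  have fin: "finite (supp x \<union> supp y)" using F1(1) assms(1,2) by auto
  have le: "\<bar>x a0 - y a0\<bar> \<le> (\<Sum>w\<in>supp x \<union> supp y. \<bar>x w - y w\<bar>)"
    by (rule member_le_sum) (use a0 fin in auto)
  show ?thesis
  proof (cases "a0 \<in> supp y")
    case True
    have "H y \<le> (1 - y a0) + D a0" using H_le[OF assms(2) True] .
    thus ?thesis using a0 le by linarith
  next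
    case False
    obtain b where b: "b \<in> supp y" using F1(2)[OF assms(2)] by auto
    have ne: "b \<noteq> a0" using b False by auto
    have cd: "{c, d} = {a0, b}" using assms(4) a0(1) b ne by auto
    hence "c \<noteq> d" using ne by (auto simp: doubleton_eq_iff)
    hence "E c d" using assms(3) by auto
    have "(c = a0 \<and> d = b) \<or> (c = b \<and> d = a0)" using cd by (auto simp: doubleton_eq_iff)
    hence "E a0 b" using \<open>E c d\<close> E_sym by blast
    have "supp y = {b}" using assms(4) cd False b by auto
    hence yb: "y b = 1" using F3[OF assms(2)] by simp
    have "H y \<le> (1 - y b) + D b" using H_le[OF assms(2) b] .
    moreover have "real (D b) \<le> real (D a0) + 1" using D_adj[OF \<open>E a0 b\<close>] .
    moreover have "y a0 = 0" using supp_out[OF False] .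
    ultimately show ?thesis using a0 le yb by simp
  qed
qed

lemma H_lip: assumes "x \<in> X" "y \<in> X" shows "\<bar>H x - H y\<bar> \<le> 2 * gmetric E x y"
  using assms
proof (cases rule: gm_cases)
  case (one c d)
  have "H y \<le> H x + (\<Sum>w\<in>supp x \<union> supp y. \<bar>x w - y w\<bar>)" using H_case1[OF assms one(1,2)] .
  moreover have "H x \<le> H y + (\<Sum>w\<in>supp x \<union> supp y. \<bar>x w - y w\<bar>)"
    using H_case1[OF assms(2,1) one(1)] one(2) sum_sym[of y x] by (simp add: Un_commute)
  ultimately show ?thesis using one(3) by simp
next
  case (two a b)
  have aV: "a \<in> V" and bV: "b \<in> V" using F1(3) assms two by auto
  have h1: "H y \<le> (1 - y b) + D b" using H_le[OF assms(2) two(2)] .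
  have h2: "H x \<le> (1 - x a) + D a" using H_le[OF assms(1) two(1)] .
  have l1: "real (D a) - (1 - x a) \<le> H x" using H_low[OF assms(1) two(1)] .
  have l2: "real (D b) - (1 - y b) \<le> H y" using H_low[OF assms(2) two(2)] .
  have t1: "real (D b) \<le> real (D a) + real (gdist E a b)" using tri1[OF aV bV] by linarith
  have t2: "real (D a) \<le> real (D b) + real (gdist E a b)" using tri2[OF aV bV] by linarith
  have "0 \<le> 1 - x a" "0 \<le> 1 - y b" using F1(4) assms two by auto
  thus ?thesis using h1 h2 l1 l2 t1 t2 two(4) by linarith
qed

definition gg :: "('z \<times> nat \<Rightarrow> real) \<Rightarrow> ennreal" where
  "gg x = ennreal (2 * exp (ln \<alpha> * fhgt Z A \<alpha> \<tau> z0 x))"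

lemma gg_prod: "gg x * ennreal (exp (- ln \<alpha> * fhgt Z A \<alpha> \<tau> z0 x)) = 2"
  unfolding gg_def by (simp add: ennreal_mult''[symmetric] mult.assoc exp_add[symmetric])

lemma CL_ge: assumes "a < b"
  shows "ennreal (fdX Z A \<alpha> \<tau> (\<gamma> a) (\<gamma> b)) \<le> curve_length (fdX Z A \<alpha> \<tau>) \<gamma> a b"
  unfolding curve_length_def
proof (rule SUP_upper2[where i="(1, \<lambda>i. if i = 0 then a else b)"])
  show "(1, \<lambda>i. if i = 0 then a else b) \<in> {(n, ts). ts 0 = a \<and> ts n = b \<and> (\<forall>i<n. ts i \<le> ts (Suc i))}"
    using assms by auto
qed simp

lemma ug: "upper_gradient Z A \<alpha> \<tau> z0 uu gg"
  unfolding upper_gradient_def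
proof (intro allI impI)
  fix \<gamma> :: "real \<Rightarrow> 'z \<times> nat \<Rightarrow> real" and a b
  assume h: "a < b \<and> (\<forall>t\<in>{a..b}. \<gamma> t \<in> X) \<and> curve_cont (fdX Z A \<alpha> \<tau>) \<gamma> a b
        \<and> curve_length (fdX Z A \<alpha> \<tau>) \<gamma> a b < \<infinity> \<and> (\<exists>s\<in>{a..b}. \<exists>t\<in>{a..b}. \<gamma> s \<noteq> \<gamma> t)"
  let ?CL = "curve_length (fdX Z A \<alpha> \<tau>) \<gamma> a b"
  have ga: "\<gamma> a \<in> X" and gb: "\<gamma> b \<in> X" using h by auto
  have li: "line_int (fdX Z A \<alpha> \<tau>) \<gamma> a b (\<lambda>x. gg x * ennreal (exp (- ln \<alpha> * fhgt Z A \<alpha> \<tau> z0 x)))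
      = 2 * ?CL"
  proof -
    have "line_int (fdX Z A \<alpha> \<tau>) \<gamma> a b (\<lambda>x. gg x * ennreal (exp (- ln \<alpha> * fhgt Z A \<alpha> \<tau> z0 x)))
        = (\<integral>\<^sup>+ \<sigma>. 2 * indicator {0..enn2real ?CL} \<sigma> \<partial>lborel)"
      unfolding line_int_def gg_prod by simp
    also have "\<dots> = 2 * emeasure lborel {0..enn2real ?CL}" by (rule nn_integral_cmult_indicator) simp
    also have "\<dots> = 2 * ?CL" using h by (simp add: enn2real_nonneg less_top[symmetric])
    finally show ?thesis .
  qed
  have "\<bar>uu (\<gamma> a) - uu (\<gamma> b)\<bar> \<le> 2 * fdX Z A \<alpha> \<tau> (\<gamma> a) (\<gamma> b)"
    using uu_lip[OF ga gb] by (simp add: fdX_def)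
  hence "ennreal \<bar>uu (\<gamma> a) - uu (\<gamma> b)\<bar> \<le> ennreal (2 * fdX Z A \<alpha> \<tau> (\<gamma> a) (\<gamma> b))" by (rule ennreal_leI)
  also have "\<dots> = 2 * ennreal (fdX Z A \<alpha> \<tau> (\<gamma> a) (\<gamma> b))" using ennreal_mult'[of 2 "fdX Z A \<alpha> \<tau> (\<gamma> a) (\<gamma> b)"] by simp
  also have "\<dots> \<le> 2 * ?CL" using CL_ge[of a b \<gamma>] h by (intro mult_left_mono) auto
  finally show "ennreal \<bar>uu (\<gamma> a) - uu (\<gamma> b)\<bar> \<le> line_int (fdX Z A \<alpha> \<tau>) \<gamma> a b (\<lambda>x. gg x * ennreal (exp (- ln \<alpha> * fhgt Z A \<alpha> \<tau> z0 x)))"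
    using li by simp
qed

lemma Zpos: "0 < emeasure \<nu> Z"
proof -
  obtain C where C: "\<forall>x\<in>Z. \<forall>r>0. 0 < emeasure \<nu> (ballZ Z x r) \<and> emeasure \<nu> (ballZ Z x r) < \<infinity> \<and>
      emeasure \<nu> (ballZ Z x (2 * r)) \<le> ennreal C * emeasure \<nu> (ballZ Z x r)"
    using dbl unfolding doubling_on_def by blast
  have "0 < emeasure \<nu> (ballZ Z z0 1)" using C z0Z by auto
  also have "\<dots> \<le> emeasure \<nu> (space \<nu>)" by (rule emeasure_space)
  finally show ?thesis by (simp add: spaceZ)
qed

lemma xs_ex: assumes "\<xi> \<in> Z" shows "\<exists>xs. \<forall>n. xs n \<in> A_xi A \<alpha> \<xi> n"
proof -
  have "\<forall>n. \<exists>z. z \<in> A_xi A \<alpha> \<xi> n" using cover[OF assms] by (auto simp: A_xi_def)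
  thus ?thesis by metis
qed

lemma ray_int: "ray_pt xs (real k) = vtx (xs k, k)"
  by (simp add: ray_pt_def edge_pt_def)

lemma ray_half: "ray_pt xs (1/2 + real k) = edge_pt (xs k, k) (xs (Suc k), Suc k) (1/2)"
proof -
  have "nat \<lfloor>1/2 + real k\<rfloor> = k" by linarith
  thus ?thesis by (simp add: ray_pt_def)
qed

lemma no_lim: "\<not> ((\<lambda>r. uu (ray_pt xs r)) \<longlongrightarrow> L) at_top"
proof
  assume l: "((\<lambda>r. uu (ray_pt xs r)) \<longlongrightarrow> L) at_top"
  have "(\<lambda>k. uu (ray_pt xs (real k))) \<longlonglongrightarrow> L"
    by (rule filterlim_compose[OF l filterlim_real_sequentially])
  hence "(\<lambda>k. 0::real) \<longlonglongrightarrow> L" by (simp add: ray_int)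
  hence L0: "L = 0" using LIMSEQ_unique tendsto_const by blast
  have "filterlim (\<lambda>k::nat. 1/2 + real k) at_top sequentially"
    by (rule filterlim_tendsto_add_at_top[OF tendsto_const filterlim_real_sequentially])
  hence "(\<lambda>k. uu (ray_pt xs (1/2 + real k))) \<longlonglongrightarrow> L"
    by (rule filterlim_compose[OF l])
  moreover have "\<And>k. uu (ray_pt xs (1/2 + real k)) = 1/2"
    by (simp add: ray_half uu_edge)
  ultimately have "(\<lambda>k. 1/2::real) \<longlonglongrightarrow> L" by simp
  hence "L = 1/2" using LIMSEQ_unique tendsto_const by blast
  with L0 show False by simp
qed

lemma notT: "\<not> trace_T_exists \<nu> A \<alpha> uu"
proof
  assume "trace_T_exists \<nu> A \<alpha> uu"
  hence ae: "AE \<xi> in \<nu>. \<exists>L. \<forall>xs. (\<forall>n. xs n \<in> A_xi A \<alpha> \<xi> n) \<longrightarrow> ((\<lambda>r. uu (ray_pt xs r)) \<longlongrightarrow> L) at_top"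
    unfolding trace_T_exists_def .
  have "AE \<xi> in \<nu>. False"
    using ae AE_space
  proof eventually_elim
    case (elim \<xi>)
    then obtain L where L: "\<forall>xs. (\<forall>n. xs n \<in> A_xi A \<alpha> \<xi> n) \<longrightarrow> ((\<lambda>r. uu (ray_pt xs r)) \<longlongrightarrow> L) at_top" by blast
    have "\<xi> \<in> Z" using elim spaceZ by auto
    then obtain xs where "\<forall>n. xs n \<in> A_xi A \<alpha> \<xi> n" using xs_ex by blast
    with L no_lim show False by blast
  qed
  hence "ae_filter \<nu> = bot" using trivial_limit_def by blast
  hence "emeasure \<nu> (space \<nu>) = 0" using ae_filter_eq_bot_iff by blast
  thus False using Zpos spaceZ by simp
qed

lemma avg0: "avg_n A \<alpha> uu \<xi> n = 0"
  unfolding avg_n_def by simp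

definition "Cd = (SOME C::real. \<forall>x\<in>Z. \<forall>r>0. 0 < emeasure \<nu> (ballZ Z x r) \<and> emeasure \<nu> (ballZ Z x r) < \<infinity> \<and>
      emeasure \<nu> (ballZ Z x (2 * r)) \<le> ennreal C * emeasure \<nu> (ballZ Z x r))"

lemma Cd: "\<forall>x\<in>Z. \<forall>r>0. 0 < emeasure \<nu> (ballZ Z x r) \<and> emeasure \<nu> (ballZ Z x r) < \<infinity> \<and>
      emeasure \<nu> (ballZ Z x (2 * r)) \<le> ennreal Cd * emeasure \<nu> (ballZ Z x r)"
  unfolding Cd_def using dbl unfolding doubling_on_def by (rule someI_ex)

lemma ballZ_all: assumes "x \<in> Z" "1 \<le> r" shows "ballZ Z x r = Z"
  using distZ assms by (force simp: ballZ_def)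

abbreviation "MZ \<equiv> emeasure \<nu> Z"

lemma MZ_fin: "MZ < \<infinity>"
proof -
  have "emeasure \<nu> (ballZ Z z0 1) < \<infinity>" using Cd z0Z by simp
  thus ?thesis using ballZ_all[OF z0Z, of 1] by simp
qed

lemma MZ_pos: "0 < MZ" using Zpos .


lemma Cd_ge1: "1 \<le> Cd"
proof -
  have c0: "\<forall>r>0. 0 < emeasure \<nu> (ballZ Z z0 r) \<and> emeasure \<nu> (ballZ Z z0 r) < \<infinity> \<and>
      emeasure \<nu> (ballZ Z z0 (2 * r)) \<le> ennreal Cd * emeasure \<nu> (ballZ Z z0 r)" using Cd z0Z by blast
  have "emeasure \<nu> (ballZ Z z0 (2 * 1)) \<le> ennreal Cd * emeasure \<nu> (ballZ Z z0 1)"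
    using c0[rule_format, of 1] by linarith
  hence "MZ \<le> ennreal Cd * MZ" using ballZ_all[OF z0Z, of 1] ballZ_all[OF z0Z, of 2] by simp
  moreover obtain m where m: "MZ = ennreal m" "0 < m"
  proof
    show "MZ = ennreal (enn2real MZ)" using MZ_fin by simp
    show "0 < enn2real MZ" using MZ_fin MZ_pos by (simp add: enn2real_positive_iff)
  qed
  ultimately have le: "ennreal m \<le> ennreal Cd * ennreal m" by simp
  show ?thesis
  proof (cases "Cd \<ge> 0")
    case True
    have "ennreal (Cd * m) = ennreal Cd * ennreal m" using True m by (simp add: ennreal_mult)
    hence "ennreal m \<le> ennreal (Cd * m)" using le by simp
    hence "m \<le> Cd * m" using True m by (simp add: ennreal_le_iff)
    thus ?thesis using m by simp
  next
    case False
    hence "ennreal Cd = 0" by (simp add: ennreal_eq_0_iff)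
    thus ?thesis using le m by simp
  qed
qed

lemma ball_sets: "ballZ Z x r \<in> sets \<nu>"
  unfolding snu sets_restrict_space ballZ_def by (rule image_eqI[where x="ball x r"]) auto


lemma dbl_iter: assumes "x \<in> Z" "r > 0"
  shows "emeasure \<nu> (ballZ Z x (2^k * r)) \<le> ennreal (Cd^k) * emeasure \<nu> (ballZ Z x r)"
proof (induction k)
  case 0 thus ?case by simp
next
  case (Suc k)
  have "emeasure \<nu> (ballZ Z x (2^Suc k * r)) = emeasure \<nu> (ballZ Z x (2 * (2^k * r)))" by (simp add: mult.assoc)
  also have "\<dots> \<le> ennreal Cd * emeasure \<nu> (ballZ Z x (2^k * r))" using Cd assms by auto
  also have "\<dots> \<le> ennreal Cd * (ennreal (Cd^k) * emeasure \<nu> (ballZ Z x r))"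
    by (intro mult_left_mono Suc.IH) auto
  also have "\<dots> = ennreal (Cd^Suc k) * emeasure \<nu> (ballZ Z x r)"
    using Cd_ge1 by (simp add: ennreal_mult mult.assoc)
  finally show ?case .
qed

definition "K0 = (SOME k::nat. \<alpha> \<le> 2^k)"
lemma K0: "\<alpha> \<le> 2^K0"
proof -
  have "\<exists>k::nat. \<alpha> \<le> 2^k" using real_arch_pow[of 2 \<alpha>] by (auto intro: less_imp_le)
  thus ?thesis unfolding K0_def by (rule someI_ex)
qed

lemma sep: assumes "x \<in> A n" "y \<in> A n" "x \<noteq> y" shows "(1/\<alpha>)^n \<le> dist x y"
proof (cases "n = 0")
  case True thus ?thesis using assms A0 by simp
next
  case False thus ?thesis using Amax[of n] assms unfolding max_separated_def separated_def by auto
qed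

lemma small_ball: assumes "x \<in> A n"
  shows "MZ \<le> ennreal (Cd^(n*K0+1)) * emeasure \<nu> (ballZ Z x ((1/\<alpha>)^n / 2))"
proof -
  have xZ: "x \<in> Z" using AZ[OF assms] .
  have big: "1 \<le> 2^(n*K0+1) * ((1/\<alpha>)^n / 2)"
  proof -
    have "2^(n*K0+1) * ((1/\<alpha>)^n / 2) = ((2::real)^K0 / \<alpha>)^n"
      by (simp add: power_mult power_divide mult.commute[of n K0] power_one_over)
    also have "1 \<le> ((2::real)^K0 / \<alpha>)^n" using K0 a1 by (intro one_le_power) simp
    finally show ?thesis by simp
  qed
  have "MZ = emeasure \<nu> (ballZ Z x (2^(n*K0+1) * ((1/\<alpha>)^n / 2)))" using ballZ_all[OF xZ big] by simp
  also have "\<dots> \<le> ennreal (Cd^(n*K0+1)) * emeasure \<nu> (ballZ Z x ((1/\<alpha>)^n / 2))"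
    by (rule dbl_iter[OF xZ]) (use a1 in simp)
  finally show ?thesis .
qed

lemma card_fin_sub: assumes "F \<subseteq> A n" "finite F" shows "real (card F) \<le> Cd^(n*K0+1)"
proof -
  let ?r = "(1/\<alpha>)^n / 2" and ?c = "Cd^(n*K0+1)"
  have disj: "disjoint_family_on (\<lambda>x. ballZ Z x ?r) F"
    unfolding disjoint_family_on_def
  proof (intro ballI impI)
    fix x y assume xy: "x \<in> F" "y \<in> F" "x \<noteq> y"
    have d: "(1/\<alpha>)^n \<le> dist x y" using sep xy assms by auto
    show "ballZ Z x ?r \<inter> ballZ Z y ?r = {}"
    proof (rule ccontr)
      assume "ballZ Z x ?r \<inter> ballZ Z y ?r \<noteq> {}"
      then obtain z where "dist x z < ?r" "dist y z < ?r" by (auto simp: ballZ_def)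
      hence "dist x y < (1/\<alpha>)^n" using dist_triangle3[of x y z] dist_commute[of z x] dist_commute[of z y] by linarith
      with d show False by simp
    qed
  qed
  have "of_nat (card F) * MZ = (\<Sum>x\<in>F. MZ)" by simp
  also have "\<dots> \<le> (\<Sum>x\<in>F. ennreal ?c * emeasure \<nu> (ballZ Z x ?r))"
    using small_ball assms by (intro sum_mono) auto
  also have "\<dots> = ennreal ?c * emeasure \<nu> (\<Union>x\<in>F. ballZ Z x ?r)"
    by (simp add: sum_distrib_left[symmetric] sum_emeasure[OF _ disj assms(2)] ball_sets image_subset_iff)
  also have "\<dots> \<le> ennreal ?c * MZ"
    by (intro mult_left_mono) (use emeasure_space[of \<nu>] spaceZ in auto)
  finally have "MZ * ennreal (real (card F)) \<le> MZ * ennreal ?c"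
    by (simp add: mult.commute ennreal_of_nat_eq_real_of_nat)
  hence "ennreal (real (card F)) \<le> ennreal ?c"
    using MZ_pos MZ_fin by (subst (asm) ennreal_mult_le_mult_iff) auto
  thus ?thesis using Cd_ge1 by (simp add: ennreal_le_iff)
qed

lemma A_fin: "finite (A n)"
proof (rule ccontr)
  assume "infinite (A n)"
  then obtain F where F: "F \<subseteq> A n" "finite F" "card F = nat \<lceil>Cd^(n*K0+1)\<rceil> + 1"
    using infinite_arbitrarily_large by blast
  have "real (card F) \<le> Cd^(n*K0+1)" using card_fin_sub[OF F(1,2)] .
  with F(3) show False by linarith
qed

lemma A_card: "real (card (A n)) \<le> Cd^(n*K0+1)"
  using card_fin_sub[OF order_refl A_fin] .

definition "WW k = {(x, j). j \<le> k \<and> x \<in> A j}"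
definition "LL m = WW (Suc m) \<times> WW (Suc m)"
definition lv :: "('z \<times> nat) \<times> ('z \<times> nat) \<Rightarrow> nat" where "lv e = min (snd (fst e)) (snd (snd e))"

lemma WW_sub: "WW k \<subseteq> A k \<times> {..k}"
  using Amono' by (auto simp: WW_def)

lemma WW_fin: "finite (WW k)"
  by (rule finite_subset[OF WW_sub]) (simp add: A_fin)

lemma WW_card: "real (card (WW k)) \<le> Cd^(k*K0+1) * (real k + 1)"
proof -
  have "card (WW k) \<le> card (A k \<times> {..k})" by (rule card_mono) (use WW_sub A_fin in auto)
  also have "\<dots> = card (A k) * (k + 1)" by (simp add: card_cartesian_product)
  finally have "real (card (WW k)) \<le> real (card (A k) * (k + 1))" by (simp only: of_nat_le_iff)
  hence "real (card (WW k)) \<le> real (card (A k)) * (real k + 1)" by (simp add: algebra_simps)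
  also have "\<dots> \<le> Cd^(k*K0+1) * (real k + 1)" using A_card by (intro mult_right_mono) auto
  finally show ?thesis .
qed

lemma LL_fin: "finite (LL m)" by (simp add: LL_def WW_fin)

lemma LL_card: "real (card (LL m)) \<le> ((real m + 2) * Cd^((m+1)*K0+1))^2"
proof -
  have "real (card (LL m)) = real (card (WW (Suc m)))^2" by (simp add: LL_def card_cartesian_product power2_eq_square)
  also have "\<dots> \<le> (Cd^((Suc m)*K0+1) * (real (Suc m) + 1))^2"
    by (rule power_mono[OF WW_card]) simp
  also have "\<dots> = ((real m + 2) * Cd^((m+1)*K0+1))^2" by (simp add: algebra_simps)
  finally show ?thesis .
qed

lemma edge_LL: assumes "E a b" shows "(a, b) \<in> LL (lv (a, b))"
proof -
  note e = E_imp[OF assms]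
  obtain x n where a: "a = (x, n)" "x \<in> A n" using e(1) by (cases a) (auto simp: fV_def)
  obtain y k where b: "b = (y, k)" "y \<in> A k" using e(2) by (cases b) (auto simp: fV_def)
  have "n \<le> Suc (min n k)" "k \<le> Suc (min n k)" using e(4) a b by auto
  thus ?thesis using a b by (auto simp: LL_def WW_def lv_def)
qed


lemma sumE: assumes c: "c \<ge> 0"
  shows "(\<integral>\<^sup>+ e. ennreal (c * exp (- ((real (lv e))^2))) \<partial>count_space {(a, b). E a b}) < \<infinity>"
proof -
  let ?Ev = "{(a, b). E a b}"
  let ?\<phi> = "\<lambda>m::nat. ennreal (c * exp (- ((real m)^2)))"
  let ?s = "\<lambda>m::nat. c * exp (- ((real m)^2)) * ((real m + 2) * Cd^((m+1)*K0+1))^2"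
  have "(\<integral>\<^sup>+ e. ?\<phi> (lv e) \<partial>count_space ?Ev) = (\<integral>\<^sup>+ e. ?\<phi> (lv e) * indicator ?Ev e \<partial>count_space UNIV)"
    by (rule nn_integral_count_space_indicator) simp
  also have "\<dots> \<le> (\<integral>\<^sup>+ e. (\<Sum>m. ?\<phi> m * indicator (LL m) e) \<partial>count_space UNIV)"
  proof (rule nn_integral_mono)
    fix e :: "('z \<times> nat) \<times> ('z \<times> nat)"
    show "?\<phi> (lv e) * indicator ?Ev e \<le> (\<Sum>m. ?\<phi> m * indicator (LL m) e)"
    proof (cases "e \<in> ?Ev")
      case True
      then obtain a b where ab: "e = (a, b)" "E a b" by auto
      have "?\<phi> (lv e) * indicator ?Ev e = ?\<phi> (lv e) * indicator (LL (lv e)) e"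
        using True edge_LL[OF ab(2)] ab(1) by simp
      also have "\<dots> = (\<Sum>m\<in>{lv e}. ?\<phi> m * indicator (LL m) e)"
      proof -
        have "\<And>f::nat\<Rightarrow>ennreal. (\<Sum>m\<in>{lv e}. f m) = f (lv e)" by simp
        from this[of "\<lambda>m. ?\<phi> m * indicator (LL m) e"] show ?thesis by (rule sym)
      qed
      also have "\<dots> \<le> (\<Sum>m. ?\<phi> m * indicator (LL m) e)" by (rule sum_le_suminf) auto
      finally show ?thesis .
    qed simp
  qed
  also have "\<dots> = (\<Sum>m. \<integral>\<^sup>+ e. ?\<phi> m * indicator (LL m) e \<partial>count_space UNIV)"
    by (rule nn_integral_suminf) simp
  also have "\<dots> = (\<Sum>m. ?\<phi> m * of_nat (card (LL m)))"
    by (simp add: nn_integral_cmult_indicator LL_fin)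
  also have "\<dots> \<le> (\<Sum>m. ennreal (?s m))"
  proof (rule suminf_le)
    fix m
    have "?\<phi> m * of_nat (card (LL m)) = ennreal (c * exp (- ((real m)^2)) * real (card (LL m)))"
      using c by (simp add: ennreal_mult ennreal_of_nat_eq_real_of_nat)
    also have "\<dots> \<le> ennreal (?s m)"
    proof (rule ennreal_leI)
      show "c * exp (- ((real m)^2)) * real (card (LL m)) \<le> ?s m"
        by (rule mult_left_mono[OF LL_card]) (use c in simp)
    qed
    finally show "?\<phi> m * of_nat (card (LL m)) \<le> ennreal (?s m)" .
  qed auto
  also have "\<dots> < \<infinity>"
  proof -
    have "(\<Sum>m. ennreal (?s m)) \<noteq> top"
      by (rule ennreal_suminf_neq_top[OF summ_aux[OF Cd_ge1 c, of K0]]) (use c in simp)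
    thus ?thesis by (simp add: less_top)
  qed
  finally show ?thesis .
qed

lemma edge_X: assumes "E a b" "0 < t" "t < 1" shows "edge_pt a b t \<in> X"
  using assms unfolding fX_def realization_def by blast

lemma H_edge: assumes "E a b" "0 < t" "t < 1" shows "real (lv (a, b)) \<le> H (edge_pt a b t)"
proof -
  have x: "edge_pt a b t \<in> X" using edge_X[OF assms] .
  obtain a0 where a0: "a0 \<in> supp (edge_pt a b t)" "H (edge_pt a b t) = (1 - edge_pt a b t a0) + D a0"
    using H_attain[OF x] by auto
  have "a0 = a \<or> a0 = b" using a0(1) edge_supp[OF E_imp(3)[OF assms(1)] assms(2,3)] by auto
  hence a0V: "a0 \<in> V" using E_imp(1,2)[OF assms(1)] by auto
  have "D a0 = snd a0" by (rule D_eq[OF a0V])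
  moreover have "lv (a, b) \<le> snd a0" using \<open>a0 = a \<or> a0 = b\<close> by (auto simp: lv_def)
  moreover have "0 \<le> 1 - edge_pt a b t a0" using F1(4)[OF x a0(1)] by simp
  ultimately show ?thesis using a0(2) by simp
qed

lemma mu_fin:
  fixes f :: "('z \<times> nat \<Rightarrow> real) \<Rightarrow> ennreal" and \<rho> :: "real \<Rightarrow> real"
  assumes c: "c \<ge> 0"
    and fb: "\<And>a b t. E a b \<Longrightarrow> 0 < t \<Longrightarrow> t < 1 \<Longrightarrow>
      f (edge_pt a b t) * ennreal (\<rho> (fhgt Z A \<alpha> \<tau> z0 (edge_pt a b t))) \<le> ennreal (c * exp (- ((real (lv (a, b)))^2)))"
  shows "mu_int Z A \<alpha> \<tau> z0 \<nu> \<rho> f < \<infinity>"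
proof -
  let ?Ev = "{(a, b). E a b}"
  let ?\<phi> = "\<lambda>e. ennreal (c * exp (- ((real (lv e))^2)))"
  let ?I = "\<lambda>e. (\<integral>\<^sup>+ t. f (edge_pt (fst e) (snd e) t)
            * ennreal (\<rho> (fhgt Z A \<alpha> \<tau> z0 (edge_pt (fst e) (snd e) t)))
            * (emeasure \<nu> (Bv Z \<alpha> (fst e)) + emeasure \<nu> (Bv Z \<alpha> (snd e)))
            * indicator {0<..<1} t \<partial>lborel)"
  have MB: "emeasure \<nu> (Bv Z \<alpha> v) \<le> MZ" for v using emeasure_space[of \<nu>] spaceZ by simp
  have Ib: "?I e \<le> (2 * MZ) * ?\<phi> e" if e: "e \<in> ?Ev" for e
  proof -
    obtain a b where ab: "e = (a, b)" "E a b" using e by auto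
    have "?I e \<le> (\<integral>\<^sup>+ t. ((2 * MZ) * ?\<phi> e) * indicator {0<..<1::real} t \<partial>lborel)"
    proof (rule nn_integral_mono)
      fix t :: real
      show "f (edge_pt (fst e) (snd e) t)
            * ennreal (\<rho> (fhgt Z A \<alpha> \<tau> z0 (edge_pt (fst e) (snd e) t)))
            * (emeasure \<nu> (Bv Z \<alpha> (fst e)) + emeasure \<nu> (Bv Z \<alpha> (snd e)))
            * indicator {0<..<1} t \<le> ((2 * MZ) * ?\<phi> e) * indicator {0<..<1::real} t"
      proof (cases "t \<in> {0<..<1}")
        case True
        have 1: "f (edge_pt a b t) * ennreal (\<rho> (fhgt Z A \<alpha> \<tau> z0 (edge_pt a b t))) \<le> ?\<phi> e"
          using fb[OF ab(2)] True ab(1) by auto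
        have 2: "emeasure \<nu> (Bv Z \<alpha> a) + emeasure \<nu> (Bv Z \<alpha> b) \<le> 2 * MZ"
          using add_mono[OF MB MB] by (simp add: mult_2)
        have "f (edge_pt a b t) * ennreal (\<rho> (fhgt Z A \<alpha> \<tau> z0 (edge_pt a b t)))
            * (emeasure \<nu> (Bv Z \<alpha> a) + emeasure \<nu> (Bv Z \<alpha> b)) \<le> ?\<phi> e * (2 * MZ)"
          by (rule mult_mono[OF 1 2]) auto
        thus ?thesis using True ab(1) by (simp add: mult.commute)
      qed simp
    qed
    also have "\<dots> = (2 * MZ) * ?\<phi> e" by (simp add: nn_integral_cmult_indicator)
    finally show ?thesis .
  qed
  have "(\<integral>\<^sup>+ e. ?I e \<partial>count_space ?Ev) \<le> (\<integral>\<^sup>+ e. (2 * MZ) * ?\<phi> e \<partial>count_space ?Ev)"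
    by (rule nn_integral_mono) (use Ib in simp)
  also have "\<dots> = (2 * MZ) * (\<integral>\<^sup>+ e. ?\<phi> e \<partial>count_space ?Ev)"
    by (rule nn_integral_cmult) simp
  also have "\<dots> < \<infinity>"
    using sumE[OF c] MZ_fin by (simp add: ennreal_mult_less_top)
  finally have fin: "(\<integral>\<^sup>+ e. ?I e \<partial>count_space ?Ev) < \<infinity>" .
  have "mu_int Z A \<alpha> \<tau> z0 \<nu> \<rho> f = (\<integral>\<^sup>+ e. ?I e \<partial>count_space ?Ev) / 2" unfolding mu_int_def by simp
  also have "\<dots> \<noteq> top" using fin by (simp add: ennreal_divide_eq_top_iff)
  finally show ?thesis by (simp add: less_top)
qed

lemma meas_uu: "uu \<in> borel_measurable (mborel X (fdX Z A \<alpha> \<tau>))"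
  by (rule lip_meas[where K=2]) (use uu_lip in \<open>auto simp: fdX_def\<close>)

lemma meas_H: "fhgt Z A \<alpha> \<tau> z0 \<in> borel_measurable (mborel X (fdX Z A \<alpha> \<tau>))"
  unfolding fhgt_def by (rule lip_meas[where K=2]) (use H_lip in \<open>auto simp: fdX_def\<close>)

lemma meas_gg: "gg \<in> borel_measurable (mborel X (fdX Z A \<alpha> \<tau>))"
proof -
  note meas_H[measurable]
  show ?thesis unfolding gg_def by measurable
qed

abbreviation "\<rho>0 \<equiv> (\<lambda>t::real. exp (- t\<^sup>2 - ln \<alpha> * p * t))"

lemma rho_bound: assumes "E a b" "0 < t" "t < 1"
  shows "\<rho>0 (fhgt Z A \<alpha> \<tau> z0 (edge_pt a b t)) \<le> exp (- ((real (lv (a, b)))^2))"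
    "\<rho>0 (fhgt Z A \<alpha> \<tau> z0 (edge_pt a b t)) * exp (ln \<alpha> * fhgt Z A \<alpha> \<tau> z0 (edge_pt a b t)) powr p
      = exp (- ((fhgt Z A \<alpha> \<tau> z0 (edge_pt a b t))^2))"
    "exp (- ((fhgt Z A \<alpha> \<tau> z0 (edge_pt a b t))^2)) \<le> exp (- ((real (lv (a, b)))^2))"
proof -
  let ?h = "fhgt Z A \<alpha> \<tau> z0 (edge_pt a b t)"
  have hl: "real (lv (a, b)) \<le> ?h" using H_edge[OF assms] by (simp add: fhgt_def)
  have l0: "0 \<le> real (lv (a, b))" by simp
  have sq: "(real (lv (a, b)))^2 \<le> ?h^2" using hl l0 by (intro power_mono) auto
  have la: "0 \<le> ln \<alpha>" using a1 by simp
  have "0 \<le> ln \<alpha> * p * ?h" using la p1 hl l0 by (intro mult_nonneg_nonneg) auto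
  thus "\<rho>0 ?h \<le> exp (- ((real (lv (a, b)))^2))" using sq by simp
  show "\<rho>0 ?h * exp (ln \<alpha> * ?h) powr p = exp (- (?h^2))"
    by (simp add: exp_powr_real exp_add[symmetric] algebra_simps)
  show "exp (- (?h^2)) \<le> exp (- ((real (lv (a, b)))^2))" using sq by simp
qed

lemma int_u: "mu_int Z A \<alpha> \<tau> z0 \<nu> \<rho>0 (\<lambda>x. ennreal (\<bar>uu x\<bar> powr p)) < \<infinity>"
proof (rule mu_fin[where c=1])
  fix a b and t :: real assume h: "E a b" "0 < t" "t < 1"
  have x: "edge_pt a b t \<in> X" using edge_X[OF h] .
  have u1: "\<bar>uu (edge_pt a b t)\<bar> powr p \<le> 1"
    using uu_nonneg[OF x] Mx(4)[OF x] p1 by (intro powr_le1) (auto simp: uu_def)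
  have u0: "0 \<le> \<bar>uu (edge_pt a b t)\<bar> powr p" by simp
  have "\<bar>uu (edge_pt a b t)\<bar> powr p * \<rho>0 (fhgt Z A \<alpha> \<tau> z0 (edge_pt a b t)) \<le> 1 * exp (- ((real (lv (a, b)))^2))"
    by (rule mult_mono[OF u1 rho_bound(1)[OF h]]) auto
  thus "ennreal (\<bar>uu (edge_pt a b t)\<bar> powr p) * ennreal (\<rho>0 (fhgt Z A \<alpha> \<tau> z0 (edge_pt a b t)))
        \<le> ennreal (1 * exp (- ((real (lv (a, b)))^2)))"
    using u0 by (simp add: ennreal_mult[symmetric] ennreal_leI)
qed simp

lemma int_g: "mu_int Z A \<alpha> \<tau> z0 \<nu> \<rho>0 (\<lambda>x. ennpow (gg x) p) < \<infinity>"
proof (rule mu_fin[where c="2 powr p"])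
  fix a b and t :: real assume h: "E a b" "0 < t" "t < 1"
  let ?h = "fhgt Z A \<alpha> \<tau> z0 (edge_pt a b t)"
  have gp: "ennpow (gg (edge_pt a b t)) p = ennreal ((2 * exp (ln \<alpha> * ?h)) powr p)"
    by (simp add: ennpow_def gg_def)
  have "(2 * exp (ln \<alpha> * ?h)) powr p * \<rho>0 ?h = 2 powr p * (\<rho>0 ?h * exp (ln \<alpha> * ?h) powr p)"
    by (simp add: powr_mult)
  also have "\<dots> = 2 powr p * exp (- (?h^2))" using rho_bound(2)[OF h] by simp
  also have "\<dots> \<le> 2 powr p * exp (- ((real (lv (a, b)))^2))"
    using rho_bound(3)[OF h] by (intro mult_left_mono) auto
  finally have le: "(2 * exp (ln \<alpha> * ?h)) powr p * \<rho>0 ?h \<le> 2 powr p * exp (- ((real (lv (a, b)))^2))" .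
  show "ennpow (gg (edge_pt a b t)) p * ennreal (\<rho>0 ?h) \<le> ennreal (2 powr p * exp (- ((real (lv (a, b)))^2)))"
    unfolding gp using le by (simp add: ennreal_mult[symmetric] ennreal_leI)
qed simp

lemma main: "N1p Z A \<alpha> \<tau> z0 \<nu> \<rho>0 p uu \<and> trace_tilde_exists \<nu> A \<alpha> uu
           \<and> (AE \<xi> in \<nu>. (\<lambda>n. avg_n A \<alpha> uu \<xi> n) \<longlonglongrightarrow> 0) \<and> \<not> trace_T_exists \<nu> A \<alpha> uu"
proof -
  have av: "avg_n A \<alpha> uu \<xi> = (\<lambda>n. 0)" for \<xi> by (rule ext) (simp add: avg0)
  show ?thesis
    unfolding N1p_def trace_tilde_exists_def av
    using meas_uu meas_gg ug int_u int_g notT by (auto simp: convergent_const)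
qed

end


theorem mainTheorem3:
  fixes Z :: "'z::metric_space set" and \<nu> :: "'z measure"
    and \<alpha> \<tau> p :: real and z0 :: 'z and A :: "nat \<Rightarrow> 'z set"
  assumes "compact Z" and "0 < diameter Z" and "diameter Z < 1"
    and "sets \<nu> = sets (restrict_space borel Z)" and "doubling_on Z \<nu>"
    and "\<alpha> > 1" and "\<tau> > 1" and "z0 \<in> Z"
    and "A 0 = {z0}"
    and "\<And>n. n \<ge> 1 \<Longrightarrow> max_separated Z ((1 / \<alpha>) ^ n) (A n)"
    and "\<And>n m. n < m \<Longrightarrow> A n \<subseteq> A m"
    and "1 \<le> p"
  shows "\<exists>u. N1p Z A \<alpha> \<tau> z0 \<nu> (\<lambda>t. exp (- t\<^sup>2 - ln \<alpha> * p * t)) p u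
           \<and> trace_tilde_exists \<nu> A \<alpha> u
           \<and> (AE \<xi> in \<nu>. (\<lambda>n. avg_n A \<alpha> u \<xi> n) \<longlonglongrightarrow> 0)
           \<and> \<not> trace_T_exists \<nu> A \<alpha> u"
proof -
  interpret S Z \<nu> \<alpha> \<tau> p z0 A using assms by unfold_locales auto
  show ?thesis using main by blast
qed

end
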